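(* Let $q$ be a prime power and $n$ a positive integer. Let $g, h\in \mathbb{F}_q[x]$, where $g(x)$ is a monic divisor of $x^n-1$, and let $f, k\in\mathbb{F}_{q^n}[x]$ be such that $k(L_g(\mathbb{F}_{q^n}))\subseteq \mathbb{F}_q^*$. Let $P(x)=f(L_g(x))+k(L_g(x))\cdot L_h(x)$. Then $P$ is a permutation polynomial of $\mathbb{F}_{q^n}$ if and only if both of the following hold: (i) $\gcd(g, h)=1$; (ii) the polynomial $Q(x)=L_g(f(x))+k(x)\cdot L_h(x)$ induces a permutation of the set $L_g(\mathbb{F}_{q^n})=\{L_g(c):c\in\mathbb{F}_{q^n}\}$.
   Context: For a polynomial $u(x)=\sum_{i=0}^m a_i x^i\in\mathbb{F}_q[x]$, its linearized $q$-associate is $L_u(x)=\sum_{i=0}^m a_i x^{q^i}$. A polynomial $P\in\mathbb{F}_{q^n}[x]$ is a permutation polynomial of $\mathbb{F}_{q^n}$ if $c\mapsto P(c)$ is a bijection of $\mathbb{F}_{q^n}$. *)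

theory Defs
  imports "HOL-Computational_Algebra.Computational_Algebra"
begin

text \<open>The prime subfield-type setup: the ambient finite field type 'a plays the role of
  F_{q^n}; the subfield F_q is the set of fixed points of the q-th power map.\<close>

definition subfield_q :: "nat \<Rightarrow> 'a::{field,finite} set" where
  "subfield_q q = {c. c ^ q = c}"

definition prime_power :: "nat \<Rightarrow> bool" where
  "prime_power q \<longleftrightarrow> (\<exists>p k. prime p \<and> k > 0 \<and> q = p ^ k)"

definition lin_assoc :: "nat \<Rightarrow> 'a::comm_ring_1 poly \<Rightarrow> 'a \<Rightarrow> 'a" where
  "lin_assoc q u x = (\<Sum>i\<le>degree u. coeff u i * x ^ (q ^ i))"

definition poly_over :: "'a::zero set \<Rightarrow> 'a poly \<Rightarrow> bool" where
  "poly_over S u \<longleftrightarrow> (\<forall>i. coeff u i \<in> S)"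

definition perm_poly :: "('a \<Rightarrow> 'a) \<Rightarrow> bool" where
  "perm_poly P \<longleftrightarrow> bij P"

end

theory Submission imports Defs begin

lemma la_sum:
  assumes "degree u < N"
  shows "lin_assoc q u x = (\<Sum>i<N. coeff u i * x^(q^i))"
  unfolding lin_assoc_def
  by (rule sum.mono_neutral_left) (use assms in \<open>auto simp: coeff_eq_0\<close>)

lemma la_0 [simp]: "lin_assoc q 0 x = 0"
  by (simp add: lin_assoc_def)

lemma la_pCons: "lin_assoc q (pCons a u) x = a*x + lin_assoc q u (x^q)"
proof -
  have "lin_assoc q (pCons a u) x = (\<Sum>i<Suc (Suc (degree u)). coeff (pCons a u) i * x^(q^i))"
    by (rule la_sum) (metis degree_pCons_le le_imp_less_Suc)
  also have "\<dots> = a * x + (\<Sum>i<Suc (degree u). coeff u i * (x^q)^(q^i))"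
    by (subst sum.lessThan_Suc_shift) (simp add: power_mult)
  also have "(\<Sum>i<Suc (degree u). coeff u i * (x^q)^(q^i)) = lin_assoc q u (x^q)"
    by (rule la_sum[symmetric]) simp
  finally show ?thesis .
qed

lemma of_nat_card_zero: "of_nat (card (UNIV :: 'a::{field,finite} set)) = (0::'a)"
proof -
  have "(\<Sum>x\<in>(UNIV::'a set). x) = (\<Sum>x\<in>UNIV. x + 1)"
    by (rule sum.reindex_bij_witness[of _ "\<lambda>x. x + 1" "\<lambda>x. x - 1"]) auto
  also have "\<dots> = (\<Sum>x\<in>UNIV. x) + of_nat (card (UNIV :: 'a set))"
    by (simp add: sum.distrib)
  finally show ?thesis by simp
qed

lemma power_card_same: "(x::'a::{field,finite}) ^ card (UNIV :: 'a set) = x"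
proof (cases "x = 0")
  case False
  have "x * (\<Prod>y\<in>UNIV-{0}. x * y) = x * x ^ (card (UNIV :: 'a set) - 1) * \<Prod>(UNIV-{0})"
    by (simp add: prod.distrib mult_ac)
  also have "x * x ^ (card (UNIV :: 'a set) - 1) = x ^ Suc (card (UNIV :: 'a set) - 1)"
    by (subst power_Suc) auto
  also have "Suc (card (UNIV :: 'a set) - 1) = card (UNIV :: 'a set)"
    using finite_UNIV_card_ge_0[where ?'a = 'a] by simp
  also have "(\<Prod>y\<in>UNIV-{0}. x * y) = (\<Prod>y\<in>UNIV-{0}. y)"
    by (rule prod.reindex_bij_witness[of _ "\<lambda>y. y / x" "\<lambda>y. x * y"]) (use False in auto)
  finally show ?thesis
    by simp
qed (use finite_UNIV_card_ge_0[where ?'a = 'a] in auto)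

lemma setup_facts:
  fixes q n :: nat
  assumes "prime_power q" and "card (UNIV :: 'a::{field,finite} set) = q ^ n"
  shows "q > 1" "\<And>x y::'a. (x + y)^q = x^q + y^q"
    "\<And>(f::nat \<Rightarrow> 'a) A. (sum f A)^q = (\<Sum>i\<in>A. f i ^ q)"
    "\<And>x::'a. x ^ (q ^ n) = x"
proof -
  obtain p k where pk: "prime p" "k > 0" "q = p ^ k"
    using assms(1) unfolding prime_power_def by blast
  then show "q > 1"
    using one_less_power[of p k] prime_gt_1_nat[of p] by simp
  have cpos: "CHAR('a) > 0" by (rule finite_imp_CHAR_pos) simp
  have cpr: "prime CHAR('a)" using cpos prime_CHAR_semidom by blast
  have "CHAR('a) dvd card (UNIV :: 'a set)"
    using of_nat_card_zero of_nat_eq_0_iff_char_dvd by blast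
  hence "CHAR('a) dvd p ^ (k * n)" using assms(2) pk by (simp add: power_mult)
  hence "CHAR('a) dvd p" using cpr prime_dvd_power by blast
  hence cp: "CHAR('a) = p" using cpr pk primes_dvd_imp_eq by blast
  have qc: "q = CHAR('a) ^ k" using cp pk by simp
  show "\<And>x y::'a. (x + y)^q = x^q + y^q"
    by (rule freshmans_dream'[OF cpr qc])
  show "\<And>(f::nat \<Rightarrow> 'a) A. (sum f A)^q = (\<Sum>i\<in>A. f i ^ q)"
    by (rule freshmans_dream_sum'[OF cpr qc])
  show "\<And>x::'a. x ^ (q ^ n) = x"
    using power_card_same[where ?'a='a] assms(2) by simp
qed


section \<open>Linearity and composition\<close>

lemma frob_neg:
  assumes F: "\<And>x y::'a::field. (x + y)^q = x^q + y^q" and q: "q > 0"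
  shows "(- x :: 'a)^q = - (x^q)"
proof -
  have "0 = (x + - x)^q" using q by simp
  also have "\<dots> = x^q + (-x)^q" by (rule F)
  finally show ?thesis by (simp add: eq_neg_iff_add_eq_0 add.commute)
qed

lemma la_add_x:
  assumes F: "\<And>x y::'a::field. (x + y)^q = x^q + y^q"
  shows "lin_assoc q u (x + y) = lin_assoc q u x + lin_assoc q u (y::'a)"
  by (induct u arbitrary: x y) (simp_all add: la_pCons F algebra_simps)

lemma la_zero_x:
  assumes "q > 0"
  shows "lin_assoc q u (0::'a::field) = 0"
  using assms by (induct u) (simp_all add: la_pCons power_0_left)

lemma la_diff_x:
  assumes F: "\<And>x y::'a::field. (x + y)^q = x^q + y^q"
  shows "lin_assoc q u (x - y) = lin_assoc q u x - lin_assoc q u (y::'a)"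
  using la_add_x[OF F, of u "x - y" y] by (simp add: algebra_simps)

lemma la_add_u:
  "lin_assoc q (u + v) x = lin_assoc q u x + lin_assoc q v (x::'a::field)"
proof (induct u arbitrary: v x)
  case 0 then show ?case by simp
next
  case (pCons a u)
  obtain b w where v: "v = pCons b w" by (cases v) auto
  show ?case using pCons(2)[of w "x^q"] by (simp add: v la_pCons algebra_simps)
qed

lemma la_smult_u:
  "lin_assoc q (smult c u) x = c * lin_assoc q u (x::'a::field)"
  by (induct u arbitrary: x) (simp_all add: la_pCons algebra_simps)

lemma la_scalar:
  assumes "c^q = c"
  shows "lin_assoc q u (c * x) = c * lin_assoc q u (x::'a::field)"
proof (induct u arbitrary: x)
  case 0 then show ?case by simp
next
  case (pCons a u)
  have "lin_assoc q u ((c * x)^q) = c * lin_assoc q u (x^q)"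
    using pCons(2)[of "x^q"] assms by (simp add: power_mult_distrib)
  then show ?case by (simp add: la_pCons algebra_simps)
qed

lemma poly_over_pCons:
  "poly_over (subfield_q q) (pCons a v) \<longleftrightarrow> a^q = a \<and> poly_over (subfield_q q) (v :: 'a::{field,finite} poly)"
  unfolding poly_over_def subfield_q_def
  by (auto simp: coeff_pCons split: nat.splits)

lemma la_pow:
  fixes v :: "'a::{field,finite} poly"
  assumes F: "\<And>x y::'a::{field,finite}. (x + y)^q = x^q + y^q"
    and "poly_over (subfield_q q) v" and q0: "q > 0"
  shows "(lin_assoc q v x)^q = lin_assoc q v (x^q)"
  using assms(2)
proof (induct v arbitrary: x)
  case 0
  then show ?case using q0 by (simp add: lin_assoc_def power_0_left)
next
  case (pCons a v)
  have "(a * x + lin_assoc q v (x^q))^q = (a*x)^q + (lin_assoc q v (x^q))^q" by (rule F)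
  then show ?case using pCons by (simp add: la_pCons poly_over_pCons power_mult_distrib)
qed

lemma la_comp:
  fixes u v :: "'a::{field,finite} poly"
  assumes F: "\<And>x y::'a::{field,finite}. (x + y)^q = x^q + y^q"
    and "poly_over (subfield_q q) v" and q0: "q > 0"
  shows "lin_assoc q (u * v) x = lin_assoc q u (lin_assoc q v x)"
proof (induct u arbitrary: x)
  case 0 then show ?case by simp
next
  case (pCons a u)
  show ?case
    by (simp add: la_add_u la_smult_u la_pCons pCons(2) la_pow[OF F assms(2) q0])
qed

lemma la_one [simp]: "lin_assoc q 1 x = (x::'a::field)"
  by (simp add: one_pCons la_pCons)

lemma la_monom: "lin_assoc q (monom c n) x = c * x^(q^n)"
  by (induct n arbitrary: x) (simp_all add: monom_0 monom_Suc la_pCons power_mult[symmetric] mult.commute)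

lemma la_diff_u:
  "lin_assoc q (u - v) x = lin_assoc q u x - lin_assoc q v (x::'a::field)"
  using la_add_u[of q "u - v" v x] by simp


section \<open>Frobenius on polynomials and the gcd\<close>

lemma sigma_mult:
  assumes S: "\<And>(f::nat\<Rightarrow>'a::field) A. (sum f A)^q = (\<Sum>i\<in>A. f i^q)" and q0: "q > 0"
  shows "map_poly (\<lambda>c. c^q) (u*v) = map_poly (\<lambda>c. c^q) u * map_poly (\<lambda>c::'a. c^q) v"
proof (rule poly_eqI)
  fix n
  have "coeff (map_poly (\<lambda>c. c^q) (u*v)) n = coeff (u*v) n ^ q"
    using q0 by (simp add: coeff_map_poly power_0_left)
  also have "\<dots> = (\<Sum>i\<le>n. coeff u i * coeff v (n-i))^q" by (simp only: coeff_mult)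
  also have "\<dots> = (\<Sum>i\<le>n. coeff u i ^ q * coeff v (n-i)^q)"
    by (simp add: S power_mult_distrib)
  also have "\<dots> = coeff (map_poly (\<lambda>c. c^q) u * map_poly (\<lambda>c::'a. c^q) v) n"
    using q0 by (simp only: coeff_mult) (simp add: coeff_map_poly power_0_left)
  finally show "coeff (map_poly (\<lambda>c. c^q) (u*v)) n = coeff (map_poly (\<lambda>c. c^q) u * map_poly (\<lambda>c::'a. c^q) v) n" .
qed

lemma poly_over_iff:
  assumes q0: "q > 0"
  shows "poly_over (subfield_q q) u \<longleftrightarrow> map_poly (\<lambda>c. c^q) u = (u :: 'a::{field,finite} poly)"
  unfolding poly_over_def subfield_q_def
  by (auto simp: poly_eq_iff coeff_map_poly q0 power_0_left)

lemma gcd_over: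
  fixes g h :: "'a::{field_gcd,finite} poly"
  assumes S: "\<And>(f::nat\<Rightarrow>'a) A. (sum f A)^q = (\<Sum>i\<in>A. f i^q)" and q0: "q > 0"
    and og: "poly_over (subfield_q q) g" and oh: "poly_over (subfield_q q) h" and g0: "g \<noteq> 0"
  shows "poly_over (subfield_q q) (gcd g h) \<and> lead_coeff (gcd g h) = 1"
proof -
  define \<sigma> where "\<sigma> = map_poly (\<lambda>c::'a. c^q)"
  define d where "d = gcd g h"
  have d0: "d \<noteq> 0" using g0 d_def by simp
  have uf: "unit_factor d = 1" unfolding d_def using g0 by (simp add: unit_factor_gcd)
  have ld: "lead_coeff d = 1"
  proof -
    have "[:unit_factor (lead_coeff d):] = 1" using uf by (simp add: unit_factor_poly_def)
    hence "coeff [:unit_factor (lead_coeff d):] 0 = coeff 1 0" by simp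
    hence u1: "unit_factor (lead_coeff d) = 1" by simp
    have "is_unit (lead_coeff d)" using d0 by (simp add: dvd_field_iff)
    hence "normalize (lead_coeff d) = 1" by (simp add: normalize_1_iff)
    then show ?thesis using unit_factor_mult_normalize[of "lead_coeff d"] u1 by simp
  qed
  have sg: "\<sigma> g = g" using og poly_over_iff[OF q0] \<sigma>_def by blast
  have sh: "\<sigma> h = h" using oh poly_over_iff[OF q0] \<sigma>_def by blast
  obtain a where a: "g = d * a" using gcd_dvd1[of g h] d_def by (metis dvdE)
  obtain b where b: "h = d * b" using gcd_dvd2[of g h] d_def by (metis dvdE)
  have m1: "\<sigma> (d * a) = \<sigma> d * \<sigma> a" unfolding \<sigma>_def by (rule sigma_mult[OF S q0])
  have "g = \<sigma> d * \<sigma> a" using sg a m1 by simp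
  hence dg: "\<sigma> d dvd g" by auto
  have m2: "\<sigma> (d * b) = \<sigma> d * \<sigma> b" unfolding \<sigma>_def by (rule sigma_mult[OF S q0])
  have "h = \<sigma> d * \<sigma> b" using sh b m2 by simp
  hence dh: "\<sigma> d dvd h" by auto
  have "\<sigma> d dvd d" using gcd_greatest[OF dg dh] d_def by simp
  then obtain c where c: "d = \<sigma> d * c" by (auto elim: dvdE)
  have cs: "coeff (\<sigma> d) (degree d) = 1" using ld q0 by (simp add: \<sigma>_def coeff_map_poly power_0_left)
  have "degree (\<sigma> d) \<le> degree d" unfolding \<sigma>_def by (rule map_poly_degree_leq)
  moreover have "degree d \<le> degree (\<sigma> d)" using cs by (intro le_degree) simp
  ultimately have degs: "degree (\<sigma> d) = degree d" by simp
  have ls: "lead_coeff (\<sigma> d) = 1" using cs degs by simp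
  have c0: "c \<noteq> 0" using c d0 by auto
  have sd0: "\<sigma> d \<noteq> 0" using ls by auto
  have "degree d = degree (\<sigma> d) + degree c" using c degree_mult_eq[OF sd0 c0] by simp
  hence dc: "degree c = 0" using degs by simp
  have "lead_coeff d = lead_coeff (\<sigma> d) * lead_coeff c" using c lead_coeff_mult by metis
  hence "coeff c 0 = 1" using ld ls dc by simp
  hence "c = [:1:]" using degree_0_id[OF dc] by simp
  hence "c = 1" by (simp add: pCons_one)
  hence "\<sigma> d = d" using c by simp
  hence "poly_over (subfield_q q) d" using poly_over_iff[OF q0] \<sigma>_def by blast
  then show ?thesis using ld d_def by simp
qed

lemma roots_bound:
  fixes e :: "'a::{field,finite} poly"
  assumes q1: "q > 1" and e0: "e \<noteq> 0"
  shows "card {y::'a. lin_assoc q e y = 0} \<le> q ^ degree e"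
proof -
  define D where "D = degree e"
  define P where "P = (\<Sum>i\<le>D. monom (coeff e i) (q^i))"
  have pv: "poly P y = lin_assoc q e y" for y
    by (simp add: P_def D_def poly_sum poly_monom lin_assoc_def)
  have "coeff P (q^D) = (\<Sum>i\<le>D. if q^i = q^D then coeff e i else 0)"
    by (simp add: P_def coeff_sum coeff_monom)
  also have "\<dots> = (\<Sum>i\<le>D. if i = D then coeff e i else 0)"
    using q1 by (intro sum.cong) auto
  also have "\<dots> = coeff e D" by simp
  finally have cP: "coeff P (q^D) \<noteq> 0" using e0 by (simp add: D_def)
  hence P0: "P \<noteq> 0" by auto
  have "degree P \<le> q^D" unfolding P_def
    by (rule degree_sum_le) (use q1 in \<open>auto intro: order.trans[OF degree_monom_le] power_increasing\<close>)
  have "card {y::'a. lin_assoc q e y = 0} = card {y. poly P y = 0}" using pv by simp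
  also have "\<dots> \<le> degree P" by (rule card_poly_roots_bound[OF P0])
  also have "\<dots> \<le> q ^ degree e" using \<open>degree P \<le> q^D\<close> D_def by simp
  finally show ?thesis .
qed

lemma kernel_gcd:
  fixes g h :: "'a::{field_gcd,finite} poly" and q n :: nat
  assumes q1: "q > 1" and F: "\<And>x y::'a. (x + y)^q = x^q + y^q"
    and S: "\<And>(f::nat\<Rightarrow>'a) A. (sum f A)^q = (\<Sum>i\<in>A. f i^q)"
    and X: "\<And>x::'a. x^(q^n) = x" and card: "card (UNIV::'a set) = q^n" and n0: "n > 0"
    and og: "poly_over (subfield_q q) g" and oh: "poly_over (subfield_q q) h" and g0: "g \<noteq> 0"
    and gd: "g dvd monom 1 n - 1"
  shows "gcd g h = 1 \<longleftrightarrow> (\<forall>z. lin_assoc q g z = 0 \<and> lin_assoc q h z = 0 \<longrightarrow> z = 0)"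
proof
  have q0: "q > 0" using q1 by simp
  assume gcd1: "gcd g h = 1"
  show "\<forall>z. lin_assoc q g z = 0 \<and> lin_assoc q h z = 0 \<longrightarrow> z = 0"
  proof (intro allI impI)
    fix z assume z: "lin_assoc q g z = 0 \<and> lin_assoc q h z = 0"
    define a where "a = fst (bezout_coefficients g h)"
    define b where "b = snd (bezout_coefficients g h)"
    have ab: "a * g + b * h = 1" using bezout_coefficients_fst_snd[of g h] gcd1 a_def b_def by simp
    have "z = lin_assoc q (a * g + b * h) z" by (simp add: ab)
    also have "\<dots> = lin_assoc q a (lin_assoc q g z) + lin_assoc q b (lin_assoc q h z)"
      by (simp add: la_add_u la_comp[OF F og q0] la_comp[OF F oh q0])
    also have "\<dots> = 0" using z by (simp add: la_zero_x[OF q0])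
    finally show "z = 0" .
  qed
next
  have q0: "q > 0" using q1 by simp
  assume K: "\<forall>z. lin_assoc q g z = 0 \<and> lin_assoc q h z = 0 \<longrightarrow> z = 0"
  show "gcd g h = 1"
  proof (rule ccontr)
    assume ne: "gcd g h \<noteq> 1"
    define d where "d = gcd g h"
    have od: "poly_over (subfield_q q) d" and ld: "lead_coeff d = 1"
      using gcd_over[OF S q0 og oh g0] d_def by auto
    have d0: "d \<noteq> 0" using g0 d_def by simp
    have dd: "degree d > 0"
    proof (rule ccontr)
      assume "\<not> 0 < degree d" hence dz: "degree d = 0" by simp
      hence "d = [:coeff d 0:]" using degree_0_id[OF dz] by simp
      also have "coeff d 0 = 1" using ld dz by simp
      finally have "d = 1" by (simp add: pCons_one)
      with ne d_def show False by simp
    qed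
    have "d dvd monom 1 n - 1" using gd unfolding d_def by (rule dvd_trans[OF gcd_dvd1])
    then obtain e where de: "monom 1 n - 1 = d * e" by (auto elim: dvdE)
    have c1: "coeff (monom 1 n :: 'a poly) n = 1" by (simp add: coeff_monom)
    have c2: "coeff (1::'a poly) n = 0" using n0 by (cases n) (simp_all add: one_pCons)
    have m0: "coeff (monom 1 n - 1 :: 'a poly) n = 1" using c1 c2 by (simp only: coeff_diff) simp
    hence "monom 1 n - 1 \<noteq> (0::'a poly)" by (metis coeff_0 zero_neq_one)
    hence e0: "e \<noteq> 0" using de by auto
    have "degree (monom 1 n - 1 :: 'a poly) \<le> n"
      by (rule degree_diff_le) (simp_all add: degree_monom_le)
    hence "degree d + degree e \<le> n" using de degree_mult_eq[OF d0 e0] by simp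
    hence deg_e: "degree e < n" using dd by simp
    have comp: "lin_assoc q e (lin_assoc q d x) = 0" for x
    proof -
      have "lin_assoc q e (lin_assoc q d x) = lin_assoc q (e * d) x" using la_comp[OF F od q0] by simp
      also have "e * d = monom 1 n - 1" using de by (simp add: mult.commute)
      also have "lin_assoc q (monom 1 n - 1) x = x^(q^n) - x" by (simp add: la_diff_u la_monom)
      also have "\<dots> = 0" using X by simp
      finally show ?thesis .
    qed
    have "range (lin_assoc q d) \<subseteq> {y. lin_assoc q e y = 0}" using comp by auto
    hence "card (range (lin_assoc q d)) \<le> card {y. lin_assoc q e y = 0}" by (intro card_mono) auto
    also have "\<dots> \<le> q ^ degree e" by (rule roots_bound[OF q1 e0])
    also have "\<dots> < q ^ n" using q1 deg_e by (simp add: power_strict_increasing)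
    finally have "card (range (lin_assoc q d)) < card (UNIV::'a set)" using card by simp
    hence "range (lin_assoc q d) \<noteq> UNIV" by auto
    hence "\<not> inj (lin_assoc q d)" using finite_UNIV_inj_surj[of "lin_assoc q d"] by auto
    then obtain x y where xy: "x \<noteq> y" "lin_assoc q d x = lin_assoc q d y" unfolding inj_def by auto
    define z where "z = x - y"
    have z0: "z \<noteq> 0" using xy z_def by simp
    have Lz: "lin_assoc q d z = 0" using xy la_diff_x[OF F] z_def by simp
    obtain a where a: "g = d * a" using gcd_dvd1[of g h] d_def by (metis dvdE)
    have "lin_assoc q g z = lin_assoc q a (lin_assoc q d z)"
      using la_comp[OF F od q0, of a z] a by (simp add: mult.commute)
    hence Lg: "lin_assoc q g z = 0" using Lz by (simp add: la_zero_x[OF q0])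
    obtain b where b: "h = d * b" using gcd_dvd2[of g h] d_def by (metis dvdE)
    have "lin_assoc q h z = lin_assoc q b (lin_assoc q d z)"
      using la_comp[OF F od q0, of b z] b by (simp add: mult.commute)
    hence Lh: "lin_assoc q h z = 0" using Lz by (simp add: la_zero_x[OF q0])
    show False using K Lg Lh z0 by blast
  qed
qed


theorem theorem2p5:
  fixes q n :: nat and g h f k :: "'a::{field_gcd,finite} poly"
  assumes "prime_power q" and "n > 0"
    and "card (UNIV :: 'a set) = q ^ n"
    and "poly_over (subfield_q q) g" and "poly_over (subfield_q q) h"
    and "lead_coeff g = 1" and "g dvd (monom 1 n - 1)"
    and "\<forall>c. poly k (lin_assoc q g c) \<in> subfield_q q - {0}"
  shows "perm_poly (\<lambda>c. poly f (lin_assoc q g c) + poly k (lin_assoc q g c) * lin_assoc q h c)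
    \<longleftrightarrow> (gcd g h = 1 \<and>
         bij_betw (\<lambda>c. lin_assoc q g (poly f c) + poly k c * lin_assoc q h c)
                  (range (lin_assoc q g)) (range (lin_assoc q g)))"
proof -
  note sf = setup_facts[OF assms(1) assms(3)]
  have q1: "q > 1" by (rule sf(1))
  have q0: "q > 0" using q1 by simp
  have F: "\<And>x y::'a. (x + y)^q = x^q + y^q" by (rule sf(2))
  have S: "\<And>(f::nat\<Rightarrow>'a) A. (sum f A)^q = (\<Sum>i\<in>A. f i^q)" by (rule sf(3))
  have X: "\<And>x::'a. x^(q^n) = x" by (rule sf(4))
  have og: "poly_over (subfield_q q) g" by (rule assms(4))
  have oh: "poly_over (subfield_q q) h" by (rule assms(5))
  have g0: "g \<noteq> 0" using assms(6) by auto
  have kg: "gcd g h = 1 \<longleftrightarrow> (\<forall>z. lin_assoc q g z = 0 \<and> lin_assoc q h z = 0 \<longrightarrow> z = 0)"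
    by (rule kernel_gcd[OF q1 F S X assms(3) assms(2) og oh g0 assms(7)])
  define Lg where "Lg = lin_assoc q g"
  define Lh where "Lh = lin_assoc q h"
  define P where "P = (\<lambda>c. poly f (Lg c) + poly k (Lg c) * Lh c)"
  define Q where "Q = (\<lambda>c. Lg (poly f c) + poly k c * Lh c)"
  have kin: "poly k (Lg c) \<in> subfield_q q - {0}" for c
    using assms(8) unfolding Lg_def by (rule spec)
  have kq: "poly k (Lg c) ^ q = poly k (Lg c)" for c
    using kin[of c] unfolding subfield_q_def by simp
  have knz: "poly k (Lg c) \<noteq> 0" for c
    using kin[of c] by simp
  have gh: "Lg (Lh c) = Lh (Lg c)" for c
  proof -
    have "Lg (Lh c) = lin_assoc q (g * h) c" unfolding Lg_def Lh_def by (rule la_comp[OF F oh q0, symmetric])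
    also have "g * h = h * g" by (simp add: mult.commute)
    also have "lin_assoc q (h * g) c = Lh (Lg c)" unfolding Lg_def Lh_def by (rule la_comp[OF F og q0])
    finally show ?thesis .
  qed
  have comm: "Lg (P c) = Q (Lg c)" for c
  proof -
    have "Lg (P c) = Lg (poly f (Lg c)) + Lg (poly k (Lg c) * Lh c)"
      unfolding P_def Lg_def by (rule la_add_x[OF F])
    also have "Lg (poly k (Lg c) * Lh c) = poly k (Lg c) * Lg (Lh c)"
      unfolding Lg_def by (rule la_scalar[OF kq[unfolded Lg_def]])
    finally show ?thesis unfolding Q_def gh by simp
  qed
  have Lg0: "Lg 0 = 0" "Lh 0 = 0" unfolding Lg_def Lh_def using la_zero_x[OF q0] by auto
  have fin: "finite (range Lg)" by simp
  have "perm_poly P \<longleftrightarrow> (gcd g h = 1 \<and> bij_betw Q (range Lg) (range Lg))"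
  proof
    assume "perm_poly P"
    hence bP: "bij P" unfolding perm_poly_def .
    have "\<forall>z. Lg z = 0 \<and> Lh z = 0 \<longrightarrow> z = 0"
    proof (intro allI impI)
      fix z assume z: "Lg z = 0 \<and> Lh z = 0"
      have "P z = P 0" unfolding P_def using z Lg0 by simp
      then show "z = 0" using injD[OF bij_is_inj[OF bP]] by simp
    qed
    hence g1: "gcd g h = 1" using kg unfolding Lg_def Lh_def by blast
    have im: "Q ` range Lg = range Lg"
    proof
      show "Q ` range Lg \<subseteq> range Lg"
      proof
        fix y assume "y \<in> Q ` range Lg"
        then obtain c where "y = Q (Lg c)" by auto
        then have "y = Lg (P c)" using comm[of c] by simp
        then show "y \<in> range Lg" by simp
      qed
    next
      show "range Lg \<subseteq> Q ` range Lg"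
      proof
        fix y assume "y \<in> range Lg"
        then obtain c where c: "y = Lg c" by auto
        obtain c' where "c = P c'" using surjD[OF bij_is_surj[OF bP]] by blast
        then have "y = Q (Lg c')" using c comm by simp
        then show "y \<in> Q ` range Lg" by auto
      qed
    qed
    have "inj_on Q (range Lg)"
      by (rule eq_card_imp_inj_on[OF fin]) (simp add: im)
    with im g1 show "gcd g h = 1 \<and> bij_betw Q (range Lg) (range Lg)"
      unfolding bij_betw_def by simp
  next
    assume R: "gcd g h = 1 \<and> bij_betw Q (range Lg) (range Lg)"
    have K: "\<forall>z. Lg z = 0 \<and> Lh z = 0 \<longrightarrow> z = 0"
      using kg[THEN iffD1, OF conjunct1[OF R]] unfolding Lg_def Lh_def .
    have iQ: "inj_on Q (range Lg)" using R unfolding bij_betw_def by blast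
    have "inj P"
    proof (rule injI)
      fix x y assume xy: "P x = P y"
      have "Q (Lg x) = Lg (P x)" by (rule comm[symmetric])
      also have "\<dots> = Lg (P y)" by (simp only: xy)
      also have "\<dots> = Q (Lg y)" by (rule comm)
      finally have "Q (Lg x) = Q (Lg y)" .
      hence lxy: "Lg x = Lg y" by (rule inj_onD[OF iQ _ rangeI rangeI])
      hence "poly k (Lg x) * Lh x = poly k (Lg x) * Lh y" using xy unfolding P_def by simp
      hence hxy: "Lh x = Lh y" using knz by simp
      have "Lg (x - y) = 0" using lxy unfolding Lg_def by (simp add: la_diff_x[OF F])
      moreover have "Lh (x - y) = 0" using hxy unfolding Lh_def by (simp add: la_diff_x[OF F])
      ultimately have "x - y = 0" using K[rule_format, of "x - y"] by simp
      then show "x = y" by simp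
    qed
    hence iP: "inj P" .
    have "surj P" by (rule finite_UNIV_inj_surj[OF finite_UNIV iP])
    hence "bij P" using iP by (simp add: bij_def)
    then show "perm_poly P" unfolding perm_poly_def .
  qed
  then show ?thesis unfolding P_def Q_def Lg_def Lh_def .
qed

end
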